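(* Let $(\mathcal{Y},T,\nu)$ be as in the context. Suppose that $R:\mathcal{U}\to\mathcal{U}$ is a Borel self-map of a complete metric space $\mathcal{U}$. Suppose that $f:\mathcal{U}\times\mathcal{Y}\to\mathbb{R}$ is a Borel function for which there exists $f^*\in L^1(\nu)$ with $\sup_{u\in\mathcal{U}}|f(u,y)|\le f^*(y)$ for each $y\in\mathcal{Y}$. Then for any $\lambda\in\mathcal{J}(R:\nu)$ with disintegration $\lambda=\int\lambda_y\otimes\delta_y\,d\nu(y)$, for $\nu$-almost every $y\in\mathcal{Y}$, \[ \lim_{n\to\infty}\frac1n\int f_n(u,y)\,d\lambda_y(u)=\int f\,d\lambda, \] where $f_n(u,y)=\sum_{k=0}^{n-1}f(R^ku,T^ky)$.
   Context: $\mathcal{Y}$ is a complete separable metric space with its Borel $\sigma$-algebra, $T:\mathcal{Y}\to\mathcal{Y}$ is Borel measurable, and $\nu$ is a $T$-invariant ergodic Borel probability measure. $\mathcal{J}(R:\nu)$ denotes the set of Borel probability measures on $\mathcal{U}\times\mathcal{Y}$ that are invariant under $R\times T$ and have $\mathcal{Y}$-marginal $\nu$. The disintegration $\lambda=\int\lambda_y\otimes\delta_y\,d\nu(y)$ means $y\mapsto\lambda_y$ is a Borel map into probability measures on $\mathcal{U}$ with $\int g\,d\lambda=\int\int g(u,y)\,d\lambda_y(u)\,d\nu(y)$ for bounded Borel $g$. *)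

theory Defs
  imports "HOL-Probability.Probability"
begin

definition invariant_ergodic :: "('y::topological_space \<Rightarrow> 'y) \<Rightarrow> 'y measure \<Rightarrow> bool" where
  "invariant_ergodic T \<nu> \<longleftrightarrow>
     prob_space \<nu> \<and> sets \<nu> = sets borel \<and> T \<in> borel_measurable borel \<and>
     distr \<nu> \<nu> T = \<nu> \<and>
     (\<forall>A \<in> sets \<nu>. T -` A = A \<longrightarrow> measure \<nu> A = 0 \<or> measure \<nu> A = 1)"

definition joinings :: "('u::topological_space \<Rightarrow> 'u) \<Rightarrow> ('y::topological_space \<Rightarrow> 'y) \<Rightarrow> 'y measure
    \<Rightarrow> ('u \<times> 'y) measure set" where
  "joinings R T \<nu> = {lam. prob_space lam \<and> sets lam = sets borel \<and>
      distr lam lam (\<lambda>(u, y). (R u, T y)) = lam \<and> distr lam borel snd = \<nu>}"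

definition disintegration :: "('y::topological_space \<Rightarrow> 'u::topological_space measure) \<Rightarrow> 'y measure
    \<Rightarrow> ('u \<times> 'y) measure \<Rightarrow> bool" where
  "disintegration K \<nu> Lam \<longleftrightarrow>
     K \<in> measurable borel (prob_algebra borel) \<and>
     (\<forall>g \<in> borel_measurable borel. (\<exists>B::real. \<forall>x. \<bar>g x\<bar> \<le> B) \<longrightarrow>
        (\<integral>x. g x \<partial>Lam) = (\<integral>y. (\<integral>u. g (u, y) \<partial>K y) \<partial>\<nu>))"

end

theory Submission imports Defs begin

lemma sets_borel_prod_sc:
  "sets (borel :: ('a::topological_space \<times> 'b::second_countable_topology) measure)
   = sets (borel \<Otimes>\<^sub>M borel)"
proof
  have "(\<lambda>x. x) \<in> measurable (borel :: ('a \<times> 'b) measure) (borel \<Otimes>\<^sub>M borel)"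
  proof -
    have "fst \<in> borel_measurable (borel :: ('a \<times> 'b) measure)"
      by (intro borel_measurable_continuous_onI continuous_on_fst continuous_on_id)
    moreover have "snd \<in> borel_measurable (borel :: ('a \<times> 'b) measure)"
      by (intro borel_measurable_continuous_onI continuous_on_snd continuous_on_id)
    ultimately show ?thesis by (simp add: measurable_pair_iff o_def)
  qed
  show "sets (borel \<Otimes>\<^sub>M borel) \<subseteq> sets (borel :: ('a \<times> 'b) measure)"
  proof
    fix A assume "A \<in> sets (borel \<Otimes>\<^sub>M borel :: ('a \<times> 'b) measure)"
    from measurable_sets[OF \<open>(\<lambda>x. x) \<in> _\<close> this] show "A \<in> sets borel" by simp
  qed
next
  obtain B :: "'b set set" where B: "countable B" "topological_basis B"
    using ex_countable_basis by blast
  have "(\<lambda>x. x) \<in> measurable (borel \<Otimes>\<^sub>M borel) (borel :: ('a \<times> 'b) measure)"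
  proof (rule borel_measurableI)
    fix Op :: "('a \<times> 'b) set" assume Op: "open Op"
    define V where "V W = \<Union>{V. open V \<and> V \<times> W \<subseteq> Op}" for W
    have "Op = (\<Union>W\<in>B. V W \<times> W)"
    proof
      show "Op \<subseteq> (\<Union>W\<in>B. V W \<times> W)"
      proof
        fix z assume z: "z \<in> Op"
        obtain u y where zz: "z = (u, y)" by (cases z)
        from open_prod_elim[OF Op z] obtain A C where AC: "open A" "open C" "z \<in> A \<times> C" "A \<times> C \<subseteq> Op"
          by blast
        then obtain W where W: "W \<in> B" "y \<in> W" "W \<subseteq> C"
          using topological_basisE[OF B(2), of C y] zz by auto
        have "A \<times> W \<subseteq> Op" using AC W by auto
        then have "u \<in> V W" using AC zz unfolding V_def by auto
        then show "z \<in> (\<Union>W\<in>B. V W \<times> W)" using W zz by auto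
      qed
    next
      show "(\<Union>W\<in>B. V W \<times> W) \<subseteq> Op" unfolding V_def by auto
    qed
    moreover have "(\<Union>W\<in>B. V W \<times> W) \<in> sets (borel \<Otimes>\<^sub>M borel)"
    proof -
      have "V W \<times> W \<in> sets (borel \<Otimes>\<^sub>M borel)" if "W \<in> B" for W
      proof (rule pair_measureI)
        show "V W \<in> sets borel" unfolding V_def by (intro borel_open open_Union) auto
        show "W \<in> sets borel" using B(2) that by (intro borel_open) (auto simp: topological_basis_open)
      qed
      then show ?thesis by (intro sets.countable_UN'[OF B(1)]) auto
    qed
    ultimately have "Op \<in> sets (borel \<Otimes>\<^sub>M borel)" by simp
    then show "(\<lambda>x. x) -` Op \<inter> space (borel \<Otimes>\<^sub>M borel) \<in> sets (borel \<Otimes>\<^sub>M borel)"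
      by (simp add: space_pair_measure)
  qed
  show "sets (borel :: ('a \<times> 'b) measure) \<subseteq> sets (borel \<Otimes>\<^sub>M borel)"
  proof
    fix A assume "A \<in> sets (borel :: ('a \<times> 'b) measure)"
    from measurable_sets[OF \<open>(\<lambda>x. x) \<in> _\<close> this] show "A \<in> sets (borel \<Otimes>\<^sub>M borel)"
      by (simp add: space_pair_measure)
  qed
qed

lemma integral_measurable_subprob_algebra2:
  fixes f :: "_ \<Rightarrow> _ \<Rightarrow> real"
  assumes f[measurable]: "(\<lambda>(x, y). f x y) \<in> borel_measurable (M \<Otimes>\<^sub>M N)"
  assumes N[measurable]: "L \<in> measurable M (subprob_algebra N)"
  shows "(\<lambda>x. integral\<^sup>L (L x) (f x)) \<in> borel_measurable M"
proof -
  note integral_measurable_subprob_algebra[measurable]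
  note measurable_distr2[measurable]
  have "(\<lambda>x. integral\<^sup>L (distr (L x) (M \<Otimes>\<^sub>M N) (\<lambda>y. (x, y))) (\<lambda>(x, y). f x y)) \<in> borel_measurable M"
    by measurable
  then show "(\<lambda>x. integral\<^sup>L (L x) (f x)) \<in> borel_measurable M"
    by (rule measurable_cong[THEN iffD1, rotated])
       (simp add: integral_distr)
qed


locale mps = prob_space M for M :: "'a measure" +
  fixes S :: "'a \<Rightarrow> 'a"
  assumes S_meas[measurable]: "S \<in> measurable M M"
      and S_pres: "distr M M S = M"
begin

lemma Sn_meas[measurable]: "(S ^^ n) \<in> measurable M M"
  by (induction n) (auto intro: measurable_comp[OF _ S_meas])

lemma Sn_pres: "distr M M (S ^^ n) = M"
proof (induction n)
  case 0 then show ?case by (simp add: id_def)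
next
  case (Suc n)
  have "distr M M (S ^^ Suc n) = distr (distr M M (S ^^ n)) M S"
    by (simp add: distr_distr)
  also have "\<dots> = M" using Suc S_pres by simp
  finally show ?case .
qed

lemma AE_S:
  assumes "AE x in M. P x" shows "AE x in M. P (S x)"
proof -
  from assms obtain N where N: "{x \<in> space M. \<not> P x} \<subseteq> N" "emeasure M N = 0" "N \<in> sets M"
    by (rule AE_E)
  have Ns: "S -` N \<inter> space M \<in> sets M" using N(3) by measurable
  have "emeasure M (S -` N \<inter> space M) = emeasure (distr M M S) N"
    by (simp add: emeasure_distr N(3))
  also have "\<dots> = 0" using S_pres N by simp
  finally show ?thesis
    by (intro AE_I[where N="S -` N \<inter> space M"] Ns)
       (use N measurable_space[OF S_meas] in auto)
qed

lemma AE_Sn: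
  assumes "AE x in M. P x" shows "AE x in M. P ((S ^^ n) x)"
proof (induction n)
  case 0 then show ?case using assms by simp
next
  case (Suc n)
  have "AE x in M. P ((S ^^ n) (S x))" using AE_S[OF Suc.IH] .
  then show ?case by (simp add: funpow_swap1)
qed

lemma integrable_Sn:
  fixes h :: "'a \<Rightarrow> real"
  assumes "integrable M h" shows "integrable M (\<lambda>x. h ((S ^^ n) x))"
proof -
  have [measurable]: "h \<in> borel_measurable M" using assms by auto
  have "integrable (distr M M (S ^^ n)) h" using assms Sn_pres by simp
  then show ?thesis by (subst (asm) integrable_distr_eq) auto
qed

lemma integral_Sn:
  fixes h :: "'a \<Rightarrow> real"
  assumes [measurable]: "h \<in> borel_measurable M"
  shows "(\<integral>x. h ((S ^^ n) x) \<partial>M) = integral\<^sup>L M h"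
proof -
  have "(\<integral>x. h ((S ^^ n) x) \<partial>M) = integral\<^sup>L (distr M M (S ^^ n)) h"
    by (subst integral_distr) auto
  then show ?thesis using Sn_pres by simp
qed

lemma integral_S:
  fixes h :: "'a \<Rightarrow> real"
  assumes [measurable]: "h \<in> borel_measurable M"
  shows "(\<integral>x. h (S x) \<partial>M) = integral\<^sup>L M h"
  using integral_Sn[OF assms, of 1] by simp

definition birk :: "('a \<Rightarrow> real) \<Rightarrow> nat \<Rightarrow> 'a \<Rightarrow> real" where
  "birk h n x = (\<Sum>k<n. h ((S ^^ k) x))"

lemma birk_0[simp]: "birk h 0 x = 0"
  by (simp add: birk_def)

lemma birk_Suc: "birk h (Suc n) x = h x + birk h n (S x)"
  unfolding birk_def by (subst sum.lessThan_Suc_shift) (simp add: funpow_swap1)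

lemma birk_meas[measurable]:
  assumes [measurable]: "h \<in> borel_measurable M" shows "birk h n \<in> borel_measurable M"
  unfolding birk_def[abs_def] by measurable

lemma integrable_birk:
  "integrable M h \<Longrightarrow> integrable M (birk h n)"
  unfolding birk_def[abs_def] using integrable_Sn by (auto intro!: integrable_sum)

lemma garsia_ind:
  fixes h :: "'a \<Rightarrow> real"
  assumes h: "integrable M h"
  shows "0 \<le> (\<integral>x. h x * indicator {x \<in> space M. \<exists>n. 0 < birk h n x} x \<partial>M)"
proof -
  have hm[measurable]: "h \<in> borel_measurable M" using h by auto
  define MN where "MN N x = Max ((\<lambda>n. birk h n x) ` {..N})" for N x
  have MN_ge: "birk h n x \<le> MN N x" if "n \<le> N" for n N x
    unfolding MN_def using that by (intro Max_ge) auto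
  have MN_nn: "0 \<le> MN N x" for N x
    using MN_ge[of 0 N x] by simp
  have MN_le: "MN N x \<le> max 0 (h x + MN N (S x))" for N x
  proof -
    have "birk h n x \<le> max 0 (h x + MN N (S x))" if "n \<le> N" for n
    proof (cases n)
      case 0 then show ?thesis by simp
    next
      case (Suc m)
      then have "birk h m (S x) \<le> MN N (S x)" using that by (intro MN_ge) auto
      then show ?thesis using Suc by (simp add: birk_Suc)
    qed
    then show ?thesis by (simp add: MN_def[of N x] Max_le_iff)
  qed
  have pw: "MN N x - MN N (S x) \<le> h x * indicator {y \<in> space M. 0 < MN N y} x"
    if "x \<in> space M" for N x
    using MN_le[of N x] MN_nn[of N x] MN_nn[of N "S x"] that
    by (cases "0 < MN N x") (auto simp: indicator_def max_def split: if_splits)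
  have MN_m[measurable]: "MN N \<in> borel_measurable M" for N
    unfolding MN_def by (intro borel_measurable_Max) auto
  have MN_int: "integrable M (MN N)" for N
  proof (rule Bochner_Integration.integrable_bound)
    show "integrable M (\<lambda>x. \<Sum>k<N. \<bar>h ((S ^^ k) x)\<bar>)"
      using integrable_Sn[OF h] by (auto intro!: integrable_sum integrable_abs)
    show "AE x in M. norm (MN N x) \<le> norm (\<Sum>k<N. \<bar>h ((S ^^ k) x)\<bar>)"
    proof (intro AE_I2)
      fix x
      have "birk h n x \<le> (\<Sum>k<N. \<bar>h ((S ^^ k) x)\<bar>)" if "n \<le> N" for n
      proof -
        have "birk h n x \<le> (\<Sum>k<n. \<bar>h ((S ^^ k) x)\<bar>)"
          unfolding birk_def by (intro sum_mono) auto
        also have "\<dots> \<le> (\<Sum>k<N. \<bar>h ((S ^^ k) x)\<bar>)"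
          using that by (intro sum_mono2) auto
        finally show ?thesis .
      qed
      then have "MN N x \<le> (\<Sum>k<N. \<bar>h ((S ^^ k) x)\<bar>)"
        by (simp add: MN_def[of N x] Max_le_iff)
      then show "norm (MN N x) \<le> norm (\<Sum>k<N. \<bar>h ((S ^^ k) x)\<bar>)"
        using MN_nn[of N x] by (simp add: sum_nonneg)
    qed
  qed auto
  have I: "0 \<le> (\<integral>x. h x * indicator {y \<in> space M. 0 < MN N y} x \<partial>M)" for N
  proof -
    have "0 = (\<integral>x. MN N x \<partial>M) - (\<integral>x. MN N (S x) \<partial>M)"
      by (simp add: integral_S)
    also have "\<dots> = (\<integral>x. MN N x - MN N (S x) \<partial>M)"
      using MN_int[of N] integrable_Sn[OF MN_int[of N], of 1] by simp
    also have "\<dots> \<le> (\<integral>x. h x * indicator {y \<in> space M. 0 < MN N y} x \<partial>M)"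
    proof (rule integral_mono)
      show "integrable M (\<lambda>x. MN N x - MN N (S x))"
        using MN_int[of N] integrable_Sn[OF MN_int[of N], of 1] by simp
      show "integrable M (\<lambda>x. h x * indicator {y \<in> space M. 0 < MN N y} x)"
        by (intro integrable_real_mult_indicator h) measurable
    qed (use pw in auto)
    finally show ?thesis .
  qed
  have lim: "(\<lambda>N. \<integral>x. h x * indicator {y \<in> space M. 0 < MN N y} x \<partial>M) \<longlonglongrightarrow>
      (\<integral>x. h x * indicator {x \<in> space M. \<exists>n. 0 < birk h n x} x \<partial>M)"
  proof (rule integral_dominated_convergence[where w="\<lambda>x. \<bar>h x\<bar>"])
    show "AE x in M. (\<lambda>N. h x * indicator {y \<in> space M. 0 < MN N y} x) \<longlonglongrightarrow>
       h x * indicator {x \<in> space M. \<exists>n. 0 < birk h n x} x"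
    proof (intro AE_I2)
      fix x assume x: "x \<in> space M"
      show "(\<lambda>N. h x * indicator {y \<in> space M. 0 < MN N y} x) \<longlonglongrightarrow>
       h x * indicator {x \<in> space M. \<exists>n. 0 < birk h n x} x"
      proof (cases "\<exists>n. 0 < birk h n x")
        case True
        then obtain n where n: "0 < birk h n x" by blast
        have "eventually (\<lambda>N. h x * indicator {y \<in> space M. 0 < MN N y} x =
            h x * indicator {x \<in> space M. \<exists>n. 0 < birk h n x} x) sequentially"
          unfolding eventually_sequentially
        proof (intro exI[of _ n] allI impI)
          fix N assume "n \<le> N"
          then have "0 < MN N x" using MN_ge[of n N x] n by linarith
          then show "h x * indicator {y \<in> space M. 0 < MN N y} x =
            h x * indicator {x \<in> space M. \<exists>n. 0 < birk h n x} x" using x True by simp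
        qed
        then show ?thesis by (rule tendsto_eventually)
      next
        case False
        have "MN N x \<le> 0" for N
          using False by (simp add: MN_def[of N x] Max_le_iff not_less)
        then have "\<not> 0 < MN N x" for N by (simp add: not_less)
        then have "h x * indicator {y \<in> space M. 0 < MN N y} x =
            h x * indicator {x \<in> space M. \<exists>n. 0 < birk h n x} x" for N
          using False by (simp add: indicator_def)
        then show ?thesis by (simp only: tendsto_const)
      qed
    qed
  qed (auto intro: integrable_abs h simp: indicator_def)
  show ?thesis using I by (intro LIMSEQ_le_const[OF lim]) auto
qed

lemma garsia:
  fixes h :: "'a \<Rightarrow> real"
  assumes h: "integrable M h" and pos: "AE x in M. \<exists>n. 0 < birk h n x"
  shows "0 \<le> integral\<^sup>L M h"
proof -
  have hm[measurable]: "h \<in> borel_measurable M" using h by auto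
  have "(\<integral>x. h x * indicator {x \<in> space M. \<exists>n. 0 < birk h n x} x \<partial>M) = integral\<^sup>L M h"
    apply (rule integral_cong_AE)
      apply measurable
    using pos by (auto simp: indicator_def)
  then show ?thesis using garsia_ind[OF h] by simp
qed

end

lemma limsup_avg_le:
  fixes s :: "nat \<Rightarrow> real"
  assumes "\<forall>n. s n - real n * b \<le> C"
  shows "Limsup sequentially (\<lambda>n. ereal (s n / real n)) \<le> ereal b"
proof (rule ereal_le_epsilon2)
  fix e :: real assume e: "0 < e"
  obtain N :: nat where N: "max C 0 / e < N" using reals_Archimedean2 by blast
  have "eventually (\<lambda>n. ereal (s n / real n) \<le> ereal b + ereal e) sequentially"
    unfolding eventually_sequentially
  proof (intro exI[of _ "Suc N"] allI impI)
    fix n assume n: "Suc N \<le> n"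
    then have np: "0 < real n" by simp
    have s: "s n \<le> real n * b + C" using assms[rule_format, of n] by simp
    have "max C 0 < real N * e" using N e by (simp add: pos_divide_less_eq)
    also have "\<dots> \<le> real n * e" using n e by (intro mult_right_mono) auto
    finally have "C < real n * e" by simp
    with s have "s n \<le> real n * (b + e)" by (simp add: algebra_simps)
    then have "s n / real n \<le> b + e" using np by (simp add: divide_le_eq mult.commute)
    then show "ereal (s n / real n) \<le> ereal b + ereal e" by simp
  qed
  then show "Limsup sequentially (\<lambda>n. ereal (s n / real n)) \<le> ereal b + ereal e"
    by (rule Limsup_bounded)
qed

lemma liminf_avg_ge:
  fixes s :: "nat \<Rightarrow> real"
  assumes "\<forall>n. real n * a - s n \<le> C"
  shows "ereal a \<le> Liminf sequentially (\<lambda>n. ereal (s n / real n))"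
proof -
  have "Limsup sequentially (\<lambda>n. ereal ((- s n) / real n)) \<le> ereal (- a)"
    using assms by (intro limsup_avg_le[where C=C]) (simp add: algebra_simps)
  moreover have "Limsup sequentially (\<lambda>n. ereal ((- s n) / real n))
      = - Liminf sequentially (\<lambda>n. ereal (s n / real n))"
    by (simp add: ereal_Limsup_uminus[symmetric] o_def)
  ultimately show ?thesis
    by (simp add: ereal_uminus_le_reorder)
qed

lemma conv_crit:
  fixes s :: "nat \<Rightarrow> real"
  assumes up: "\<exists>b C. \<forall>n. s n - real n * b \<le> C"
      and lo: "\<exists>a C. \<forall>n. real n * a - s n \<le> C"
      and gap: "\<And>a b. a < b \<Longrightarrow> (\<exists>C. \<forall>n. s n - real n * b \<le> C) \<or> (\<exists>C. \<forall>n. real n * a - s n \<le> C)"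
  shows "convergent (\<lambda>n. s n / real n)"
proof -
  define X where "X = (\<lambda>n. ereal (s n / real n))"
  define Li where "Li = Liminf sequentially X"
  define Ls where "Ls = Limsup sequentially X"
  obtain b where b: "Ls \<le> ereal b" using up limsup_avg_le unfolding Ls_def X_def by blast
  obtain a where a: "ereal a \<le> Li" using lo liminf_avg_ge unfolding Li_def X_def by blast
  have le: "Li \<le> Ls" unfolding Li_def Ls_def by (rule Liminf_le_Limsup) simp
  define l where "l = real_of_ereal Li"
  define u where "u = real_of_ereal Ls"
  have Li: "Li = ereal l" using a b le unfolding l_def by (cases Li) auto
  have Ls: "Ls = ereal u" using a b le unfolding u_def by (cases Ls) auto
  have eq: "l = u"
  proof (rule ccontr)
    assume "l \<noteq> u"
    with le Li Ls have lu: "l < u" by simp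
    define a' where "a' = l + (u - l) / 3"
    define b' where "b' = u - (u - l) / 3"
    have "a' < b'" using lu unfolding a'_def b'_def by (simp add: field_simps)
    from gap[OF this] show False
    proof
      assume "\<exists>C. \<forall>n. s n - real n * b' \<le> C"
      then have "Ls \<le> ereal b'" unfolding Ls_def X_def using limsup_avg_le by blast
      with Ls lu show False unfolding b'_def by simp
    next
      assume "\<exists>C. \<forall>n. real n * a' - s n \<le> C"
      then have "ereal a' \<le> Li" unfolding Li_def X_def using liminf_avg_ge by blast
      with Li lu show False unfolding a'_def by simp
    qed
  qed
  have "(X \<longlongrightarrow> ereal u) sequentially"
    using Li Ls eq unfolding Li_def Ls_def
    by (subst tendsto_iff_Liminf_eq_Limsup) auto
  then have "(\<lambda>n. s n / real n) \<longlonglongrightarrow> u" unfolding X_def by simp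
  then show ?thesis by (rule convergentI)
qed


context mps begin

definition unb :: "('a \<Rightarrow> real) \<Rightarrow> 'a \<Rightarrow> bool" where
  "unb g x \<longleftrightarrow> (\<forall>C::nat. \<exists>n. real C < birk g n x)"

lemma unb_meas[measurable]:
  assumes [measurable]: "g \<in> borel_measurable M"
  shows "Measurable.pred M (unb g)"
  unfolding unb_def[abs_def] by measurable

lemma unb_S:
  assumes "x \<in> space M" shows "unb g (S x) \<longleftrightarrow> unb g x"
proof
  assume u: "unb g (S x)"
  show "unb g x" unfolding unb_def
  proof
    fix C :: nat
    obtain C' :: nat where C': "real C - g x \<le> real C'" using real_arch_simple by blast
    from u obtain n where "real C' < birk g n (S x)" unfolding unb_def by blast
    then have "real C < birk g (Suc n) x" using C' by (simp add: birk_Suc)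
    then show "\<exists>n. real C < birk g n x" by blast
  qed
next
  assume u: "unb g x"
  show "unb g (S x)" unfolding unb_def
  proof
    fix C :: nat
    obtain C' :: nat where C': "real C + \<bar>g x\<bar> \<le> real C'" using real_arch_simple by blast
    from u obtain n where n: "real C' < birk g n x" unfolding unb_def by blast
    then have "n \<noteq> 0" using C' by (cases n) auto
    then obtain m where m: "n = Suc m" by (cases n) auto
    have "real C < birk g m (S x)" using n C' m by (simp add: birk_Suc)
    then show "\<exists>n. real C < birk g n (S x)" by blast
  qed
qed

lemma unb_pos: "unb g x \<Longrightarrow> \<exists>n. 0 < birk g n x"
  unfolding unb_def by (metis of_nat_0)

lemma orbit_inv:
  assumes "x \<in> space M" "\<And>x. x \<in> space M \<Longrightarrow> S x \<in> A \<longleftrightarrow> x \<in> A"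
  shows "(S ^^ k) x \<in> A \<longleftrightarrow> x \<in> A"
proof (induction k)
  case (Suc k)
  have "(S ^^ k) x \<in> space M" using assms(1) measurable_space[OF Sn_meas] by blast
  then show ?case using assms(2)[of "(S ^^ k) x"] Suc by simp
qed simp

lemma garsia_loc:
  fixes h :: "'a \<Rightarrow> real"
  assumes h: "integrable M h" and A[measurable]: "A \<in> sets M"
    and inv: "\<And>x. x \<in> space M \<Longrightarrow> S x \<in> A \<longleftrightarrow> x \<in> A"
    and pos: "\<And>x. x \<in> A \<Longrightarrow> \<exists>n. 0 < birk h n x"
  shows "0 \<le> (\<integral>x. h x * indicator A x \<partial>M)"
proof -
  have hm[measurable]: "h \<in> borel_measurable M" using h by auto
  define g where "g x = h x * indicator A x" for x
  have gi: "integrable M g" unfolding g_def by (intro integrable_real_mult_indicator h A)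
  have bg: "birk g n x = indicator A x * birk h n x" if "x \<in> space M" for n x
    unfolding birk_def g_def using orbit_inv[OF that inv]
    by (auto simp: indicator_def sum_distrib_left)
  have "(\<integral>x. g x * indicator {x \<in> space M. \<exists>n. 0 < birk g n x} x \<partial>M) = (\<integral>x. g x \<partial>M)"
  proof (intro Bochner_Integration.integral_cong refl)
    fix x assume x: "x \<in> space M"
    show "g x * indicator {x \<in> space M. \<exists>n. 0 < birk g n x} x = g x"
    proof (cases "x \<in> A")
      case True
      then show ?thesis using pos[OF True] bg[OF x] x by (auto simp: indicator_def)
    qed (simp add: g_def)
  qed
  then show ?thesis using garsia_ind[OF gi] unfolding g_def by simp
qed

lemma birk_diff_const: "birk (\<lambda>x. g x - c) n x = birk g n x - real n * c"
  unfolding birk_def by (simp add: sum_subtractf)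

lemma birk_const_diff: "birk (\<lambda>x. c - g x) n x = real n * c - birk g n x"
  unfolding birk_def by (simp add: sum_subtractf)

lemma not_unb: "\<not> unb g x \<Longrightarrow> \<exists>C. \<forall>n. birk g n x \<le> C"
  unfolding unb_def by (auto simp: not_less)

lemma AE_gap:
  fixes f :: "'a \<Rightarrow> real"
  assumes f: "integrable M f" and ab: "a < b"
  shows "AE x in M. \<not> (unb (\<lambda>x. f x - b) x \<and> unb (\<lambda>x. a - f x) x)"
proof -
  have fm[measurable]: "f \<in> borel_measurable M" using f by auto
  define A where "A = {x \<in> space M. unb (\<lambda>x. f x - b) x \<and> unb (\<lambda>x. a - f x) x}"
  have A[measurable]: "A \<in> sets M" unfolding A_def by measurable
  have inv: "S x \<in> A \<longleftrightarrow> x \<in> A" if "x \<in> space M" for x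
    unfolding A_def using unb_S[OF that] measurable_space[OF S_meas that] that by auto
  have i1: "0 \<le> (\<integral>x. (f x - b) * indicator A x \<partial>M)"
    by (rule garsia_loc[OF _ A inv]) (use f unb_pos in \<open>auto simp: A_def\<close>)
  have i2: "0 \<le> (\<integral>x. (a - f x) * indicator A x \<partial>M)"
    by (rule garsia_loc[OF _ A inv]) (use f unb_pos in \<open>auto simp: A_def\<close>)
  have int1: "integrable M (\<lambda>x. (f x - b) * indicator A x)"
    using f by (intro integrable_real_mult_indicator A) auto
  have int2: "integrable M (\<lambda>x. (a - f x) * indicator A x)"
    using f by (intro integrable_real_mult_indicator A) auto
  have "0 \<le> (\<integral>x. (f x - b) * indicator A x \<partial>M) + (\<integral>x. (a - f x) * indicator A x \<partial>M)"
    using i1 i2 by simp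
  also have "\<dots> = (\<integral>x. (f x - b) * indicator A x + (a - f x) * indicator A x \<partial>M)"
    using int1 int2 by simp
  also have "\<dots> = (\<integral>x. (a - b) * indicator A x \<partial>M)"
    by (intro Bochner_Integration.integral_cong refl) (auto simp: algebra_simps)
  also have "\<dots> = (a - b) * measure M A" using A by simp
  finally have "measure M A \<le> 0" using ab by (simp add: zero_le_mult_iff)
  then have "measure M A = 0" using measure_nonneg[of M A] by simp
  then have "A \<in> null_sets M" using A by (simp add: emeasure_eq_measure null_setsI)
  from AE_not_in[OF this] AE_space show ?thesis
    by eventually_elim (auto simp: A_def)
qed

end

context mps begin

lemma AE_not_unb_up:
  fixes g :: "'a \<Rightarrow> real"
  assumes g: "integrable M g"
  shows "AE x in M. \<exists>m::nat. \<not> unb (\<lambda>x. g x - real m) x"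
proof -
  have gm[measurable]: "g \<in> borel_measurable M" using g by auto
  define A where "A m = {x \<in> space M. unb (\<lambda>x. g x - real m) x}" for m :: nat
  have A[measurable]: "A m \<in> sets M" for m unfolding A_def by measurable
  have inv: "S x \<in> A m \<longleftrightarrow> x \<in> A m" if "x \<in> space M" for x m
    unfolding A_def using unb_S[OF that] measurable_space[OF S_meas that] that by auto
  have bnd: "real m * measure M (A m) \<le> (\<integral>x. \<bar>g x\<bar> \<partial>M)" for m
  proof -
    have i1: "0 \<le> (\<integral>x. (g x - real m) * indicator (A m) x \<partial>M)"
      by (rule garsia_loc[OF _ A inv]) (use g unb_pos in \<open>auto simp: A_def\<close>)
    have int1: "integrable M (\<lambda>x. g x * indicator (A m) x)"
      using g by (intro integrable_real_mult_indicator A) auto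
    have "(\<integral>x. (g x - real m) * indicator (A m) x \<partial>M)
        = (\<integral>x. g x * indicator (A m) x - real m * indicator (A m) x \<partial>M)"
      by (intro Bochner_Integration.integral_cong refl) (simp add: algebra_simps)
    also have "\<dots> = (\<integral>x. g x * indicator (A m) x \<partial>M) - (\<integral>x. real m * indicator (A m) x \<partial>M)"
      using int1 A by (intro Bochner_Integration.integral_diff) (auto intro!: integrable_real_indicator simp: emeasure_eq_measure)
    also have "\<dots> = (\<integral>x. g x * indicator (A m) x \<partial>M) - real m * measure M (A m)"
      using A by simp
    finally have "real m * measure M (A m) \<le> (\<integral>x. g x * indicator (A m) x \<partial>M)"
      using i1 by simp
    also have "\<dots> \<le> (\<integral>x. \<bar>g x\<bar> \<partial>M)"
      using int1 g by (intro integral_mono) (auto simp: indicator_def)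
    finally show ?thesis .
  qed
  define B where "B = {x \<in> space M. \<forall>m::nat. unb (\<lambda>x. g x - real m) x}"
  have B[measurable]: "B \<in> sets M" unfolding B_def by measurable
  have BA: "measure M B \<le> measure M (A m)" for m
    using A by (intro finite_measure_mono) (auto simp: A_def B_def)
  have "measure M B = 0"
  proof (rule ccontr)
    assume "measure M B \<noteq> 0"
    then have pos: "0 < measure M B" using measure_nonneg[of M B] by linarith
    obtain m :: nat where m: "(\<integral>x. \<bar>g x\<bar> \<partial>M) / measure M B < real m"
      using reals_Archimedean2 by blast
    then have "(\<integral>x. \<bar>g x\<bar> \<partial>M) < real m * measure M B"
      using pos by (simp add: pos_divide_less_eq)
    also have "\<dots> \<le> real m * measure M (A m)" using BA by (intro mult_left_mono) auto
    finally show False using bnd[of m] by simp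
  qed
  then have "B \<in> null_sets M" using B by (simp add: emeasure_eq_measure null_setsI)
  from AE_not_in[OF this] AE_space show ?thesis
    by eventually_elim (auto simp: B_def)
qed

lemma birk_neg: "birk (\<lambda>x. - g x) n x = - birk g n x"
  unfolding birk_def by (simp add: sum_negf)

lemma AE_conv:
  fixes f :: "'a \<Rightarrow> real"
  assumes f: "integrable M f"
  shows "AE x in M. convergent (\<lambda>n. birk f n x / real n)"
proof -
  have 1: "AE x in M. \<exists>m::nat. \<not> unb (\<lambda>x. f x - real m) x"
    by (rule AE_not_unb_up[OF f])
  have 2: "AE x in M. \<exists>m::nat. \<not> unb (\<lambda>x. - f x - real m) x"
    by (rule AE_not_unb_up) (use f in auto)
  have 3: "AE x in M. \<forall>a::rat. \<forall>b::rat. a < b \<longrightarrow>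
      \<not> (unb (\<lambda>x. f x - of_rat b) x \<and> unb (\<lambda>x. of_rat a - f x) x)"
    unfolding AE_all_countable
  proof (intro allI)
    fix a b :: rat
    show "AE x in M. a < b \<longrightarrow> \<not> (unb (\<lambda>x. f x - of_rat b) x \<and> unb (\<lambda>x. of_rat a - f x) x)"
    proof (cases "a < b")
      case True
      then have "(of_rat a :: real) < of_rat b" by (simp add: of_rat_less)
      from AE_gap[OF f this] show ?thesis by simp
    qed simp
  qed
  from 1 2 3 show ?thesis
  proof eventually_elim
    case (elim x)
    show ?case
    proof (rule conv_crit)
      from elim(1) obtain m :: nat where "\<not> unb (\<lambda>x. f x - real m) x" by blast
      from not_unb[OF this] obtain C where "\<forall>n. birk f n x - real n * real m \<le> C"
        by (auto simp: birk_diff_const)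
      then show "\<exists>b C. \<forall>n. birk f n x - real n * b \<le> C" by blast
    next
      from elim(2) obtain m :: nat where "\<not> unb (\<lambda>x. - f x - real m) x" by blast
      from not_unb[OF this] obtain C where "\<forall>n. - birk f n x - real n * real m \<le> C"
        by (auto simp: birk_diff_const[where g="\<lambda>x. - f x"] birk_neg)
      then have "\<forall>n. real n * (- real m) - birk f n x \<le> C"
        by (metis add.commute diff_conv_add_uminus mult_minus_right)
      then show "\<exists>a C. \<forall>n. real n * a - birk f n x \<le> C" by blast
    next
      fix a b :: real assume ab: "a < b"
      obtain a' where a': "a' \<in> \<rat>" "a < a'" "a' < b" using Rats_dense_in_real[OF ab] by blast
      obtain b' where b': "b' \<in> \<rat>" "a' < b'" "b' < b" using Rats_dense_in_real[OF a'(3)] by blast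
      obtain qa where qa: "a' = of_rat qa" using a'(1) Rats_cases by blast
      obtain qb where qb: "b' = of_rat qb" using b'(1) Rats_cases by blast
      have "qa < qb" using a'(2) b'(2) qa qb by (simp add: of_rat_less)
      then have "\<not> unb (\<lambda>x. f x - b') x \<or> \<not> unb (\<lambda>x. a' - f x) x"
        using elim(3) qa qb by blast
      then show "(\<exists>C. \<forall>n. birk f n x - real n * b \<le> C) \<or> (\<exists>C. \<forall>n. real n * a - birk f n x \<le> C)"
      proof
        assume "\<not> unb (\<lambda>x. f x - b') x"
        from not_unb[OF this] obtain C where C: "\<forall>n. birk f n x - real n * b' \<le> C"
          by (auto simp: birk_diff_const)
        have "birk f n x - real n * b \<le> C" for n
        proof -
          have "real n * b' \<le> real n * b" using b' by (intro mult_left_mono) auto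
          then show ?thesis using C[rule_format, of n] by linarith
        qed
        then show ?thesis by blast
      next
        assume "\<not> unb (\<lambda>x. a' - f x) x"
        from not_unb[OF this] obtain C where C: "\<forall>n. real n * a' - birk f n x \<le> C"
          by (auto simp: birk_const_diff)
        have "real n * a - birk f n x \<le> C" for n
        proof -
          have "real n * a \<le> real n * a'" using a' by (intro mult_left_mono) auto
          then show ?thesis using C[rule_format, of n] by linarith
        qed
        then show ?thesis by blast
      qed
    qed
  qed
qed

end

context mps begin

definition fbar :: "('a \<Rightarrow> real) \<Rightarrow> 'a \<Rightarrow> real" where
  "fbar f x = lim (\<lambda>n. birk f n x / real n)"

lemma fbar_meas[measurable]:
  assumes [measurable]: "f \<in> borel_measurable M" shows "fbar f \<in> borel_measurable M"
  unfolding fbar_def[abs_def] by measurable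

lemma AE_lim:
  assumes "integrable M f" shows "AE x in M. (\<lambda>n. birk f n x / real n) \<longlonglongrightarrow> fbar f x"
  using AE_conv[OF assms] by eventually_elim (simp add: fbar_def convergent_LIMSEQ_iff)

lemma AE_fbar_S:
  assumes f: "integrable M f" shows "AE x in M. fbar f (S x) = fbar f x"
  using AE_lim[OF f] AE_S[OF AE_lim[OF f]]
proof eventually_elim
  case (elim x)
  have L1: "(\<lambda>n. birk f (Suc n) x / real (Suc n)) \<longlonglongrightarrow> fbar f x"
    using LIMSEQ_Suc[OF elim(1)] .
  have eq: "birk f (Suc n) x / real (Suc n) =
      f x / real (Suc n) + (real n / real (Suc n)) * (birk f n (S x) / real n)" for n
  proof (cases "n = 0")
    case True then show ?thesis by (simp add: birk_Suc)
  next
    case False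
    then have "real n / real (Suc n) * (birk f n (S x) / real n) = birk f n (S x) / real (Suc n)"
      by simp
    then show ?thesis by (simp add: birk_Suc add_divide_distrib del: of_nat_Suc)
  qed
  have "(\<lambda>n. f x / real (Suc n) + (real n / real (Suc n)) * (birk f n (S x) / real n))
      \<longlonglongrightarrow> 0 + 1 * fbar f (S x)"
  proof (intro tendsto_add tendsto_mult elim(2))
    show "(\<lambda>n. f x / real (Suc n)) \<longlonglongrightarrow> 0"
      using LIMSEQ_Suc[OF lim_const_over_n[of "f x"]] by simp
    show "(\<lambda>n. real n / real (Suc n)) \<longlonglongrightarrow> 1"
      using LIMSEQ_n_over_Suc_n by simp
  qed
  then have "(\<lambda>n. birk f (Suc n) x / real (Suc n)) \<longlonglongrightarrow> fbar f (S x)"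
    unfolding eq by simp
  from LIMSEQ_unique[OF L1 this] show ?case by simp
qed

lemma AE_fbar_Sn:
  assumes f: "integrable M f" shows "AE x in M. \<forall>k. fbar f ((S ^^ k) x) = fbar f x"
proof -
  have "AE x in M. \<forall>k. fbar f (S ((S ^^ k) x)) = fbar f ((S ^^ k) x)"
    unfolding AE_all_countable using AE_Sn[OF AE_fbar_S[OF f]] by blast
  then show ?thesis
  proof eventually_elim
    case (elim x)
    show ?case
    proof
      fix k show "fbar f ((S ^^ k) x) = fbar f x"
        by (induction k) (use elim in auto)
    qed
  qed
qed

lemma integrable_fbar:
  fixes f :: "'a \<Rightarrow> real"
  assumes f: "integrable M f" shows "integrable M (fbar f)"
proof -
  have fm[measurable]: "f \<in> borel_measurable M" using f by auto
  define av where "av n x = birk f n x / real n" for n x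
  have avm[measurable]: "av n \<in> borel_measurable M" for n unfolding av_def[abs_def] by measurable
  have "(\<integral>\<^sup>+x. ennreal (norm (fbar f x)) \<partial>M) = (\<integral>\<^sup>+x. liminf (\<lambda>n. ennreal \<bar>av n x\<bar>) \<partial>M)"
  proof (rule nn_integral_cong_AE)
    show "AE x in M. ennreal (norm (fbar f x)) = liminf (\<lambda>n. ennreal \<bar>av n x\<bar>)"
      using AE_lim[OF f]
    proof eventually_elim
      case (elim x)
      have "(\<lambda>n. ennreal \<bar>av n x\<bar>) \<longlonglongrightarrow> ennreal \<bar>fbar f x\<bar>"
        using elim unfolding av_def by (intro tendsto_ennrealI tendsto_rabs)
      from lim_imp_Liminf[OF _ this] show ?case by simp
    qed
  qed
  also have "\<dots> \<le> liminf (\<lambda>n. \<integral>\<^sup>+x. ennreal \<bar>av n x\<bar> \<partial>M)"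
    by (intro nn_integral_liminf) measurable
  also have "\<dots> \<le> limsup (\<lambda>n. \<integral>\<^sup>+x. ennreal \<bar>av n x\<bar> \<partial>M)"
    by (intro Liminf_le_Limsup) simp
  also have "\<dots> \<le> ennreal (\<integral>x. \<bar>f x\<bar> \<partial>M)"
  proof (intro Limsup_bounded always_eventually allI)
    fix n
    define w where "w x = (\<Sum>k<n. \<bar>f ((S ^^ k) x)\<bar>) / real n" for x
    have wi: "integrable M w"
      unfolding w_def using integrable_Sn[OF f] by (auto intro!: integrable_sum integrable_abs)
    have "(\<integral>\<^sup>+x. ennreal \<bar>av n x\<bar> \<partial>M) \<le> (\<integral>\<^sup>+x. ennreal (w x) \<partial>M)"
    proof (intro nn_integral_mono ennreal_leI)
      fix x
      have "\<bar>birk f n x\<bar> \<le> (\<Sum>k<n. \<bar>f ((S ^^ k) x)\<bar>)"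
        unfolding birk_def by (rule sum_abs)
      then show "\<bar>av n x\<bar> \<le> w x"
        unfolding av_def w_def by (simp add: abs_div_pos divide_right_mono)
    qed
    also have "\<dots> = ennreal (integral\<^sup>L M w)"
      by (intro nn_integral_eq_integral wi AE_I2) (simp add: w_def sum_nonneg)
    also have "integral\<^sup>L M w = (\<Sum>k<n. (\<integral>x. \<bar>f ((S ^^ k) x)\<bar> \<partial>M)) / real n"
      unfolding w_def using integrable_Sn[OF f]
      by (subst integral_divide_zero, subst Bochner_Integration.integral_sum) (auto intro!: integrable_abs)
    also have "\<dots> = (\<Sum>k<n. (\<integral>x. \<bar>f x\<bar> \<partial>M)) / real n"
      by (subst integral_Sn[where h="\<lambda>x. \<bar>f x\<bar>"]) auto
    also have "\<dots> \<le> (\<integral>x. \<bar>f x\<bar> \<partial>M)"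
      by (cases "n = 0") auto
    finally show "(\<integral>\<^sup>+x. ennreal \<bar>av n x\<bar> \<partial>M) \<le> ennreal (\<integral>x. \<bar>f x\<bar> \<partial>M)"
      by (simp add: ennreal_leI)
  qed
  also have "\<dots> < \<infinity>" by simp
  finally show ?thesis by (intro integrableI_bounded) auto
qed

lemma integral_fbar:
  fixes f :: "'a \<Rightarrow> real"
  assumes f: "integrable M f" shows "integral\<^sup>L M (fbar f) = integral\<^sup>L M f"
proof -
  have fm[measurable]: "f \<in> borel_measurable M" using f by auto
  have fi: "integrable M (fbar f)" by (rule integrable_fbar[OF f])
  have bf: "birk (fbar f) n x = real n * fbar f x" if "\<forall>k. fbar f ((S ^^ k) x) = fbar f x" for n x
    unfolding birk_def using that by simp
  have birk_lin: "birk (\<lambda>x. s * f x + t * fbar f x + e) n x = s * birk f n x + t * birk (fbar f) n x + real n * e"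
    for s t e n x
    unfolding birk_def by (simp add: sum.distrib sum_distrib_left)
  have up: "integral\<^sup>L M (fbar f) \<le> integral\<^sup>L M f + e" if e: "0 < e" for e
  proof -
    have "0 \<le> (\<integral>x. 1 * f x + (-1) * fbar f x + e \<partial>M)"
    proof (rule garsia)
      show "integrable M (\<lambda>x. 1 * f x + (-1) * fbar f x + e)" using f fi by auto
      show "AE x in M. \<exists>n. 0 < birk (\<lambda>x. 1 * f x + (-1) * fbar f x + e) n x"
        using AE_lim[OF f] AE_fbar_Sn[OF f]
      proof eventually_elim
        case (elim x)
        have "eventually (\<lambda>n. dist (birk f n x / real n) (fbar f x) < e) sequentially"
          using elim(1) e by (rule tendstoD)
        then obtain N where N: "\<And>n. N \<le> n \<Longrightarrow> dist (birk f n x / real n) (fbar f x) < e"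
          unfolding eventually_sequentially by blast
        define n where "n = Suc N"
        have np: "0 < real n" unfolding n_def by simp
        have "fbar f x - e < birk f n x / real n" using N[of n] unfolding n_def dist_real_def by auto
        then have "real n * (fbar f x - e) < birk f n x" using np by (simp add: pos_less_divide_eq mult.commute)
        then have "0 < birk (\<lambda>x. 1 * f x + (-1) * fbar f x + e) n x"
          unfolding birk_lin bf[OF elim(2)] by (simp add: algebra_simps)
        then show ?case by blast
      qed
    qed
    also have "\<dots> = integral\<^sup>L M f - integral\<^sup>L M (fbar f) + e"
      using f fi by (simp add: prob_space)
    finally show ?thesis by simp
  qed
  have lo: "integral\<^sup>L M f \<le> integral\<^sup>L M (fbar f) + e" if e: "0 < e" for e
  proof -
    have "0 \<le> (\<integral>x. (-1) * f x + 1 * fbar f x + e \<partial>M)"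
    proof (rule garsia)
      show "integrable M (\<lambda>x. (-1) * f x + 1 * fbar f x + e)" using f fi by auto
      show "AE x in M. \<exists>n. 0 < birk (\<lambda>x. (-1) * f x + 1 * fbar f x + e) n x"
        using AE_lim[OF f] AE_fbar_Sn[OF f]
      proof eventually_elim
        case (elim x)
        have "eventually (\<lambda>n. dist (birk f n x / real n) (fbar f x) < e) sequentially"
          using elim(1) e by (rule tendstoD)
        then obtain N where N: "\<And>n. N \<le> n \<Longrightarrow> dist (birk f n x / real n) (fbar f x) < e"
          unfolding eventually_sequentially by blast
        define n where "n = Suc N"
        have np: "0 < real n" unfolding n_def by simp
        have "birk f n x / real n < fbar f x + e" using N[of n] unfolding n_def dist_real_def by auto
        then have "birk f n x < real n * (fbar f x + e)" using np by (simp add: pos_divide_less_eq mult.commute)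
        then have "0 < birk (\<lambda>x. (-1) * f x + 1 * fbar f x + e) n x"
          unfolding birk_lin bf[OF elim(2)] by (simp add: algebra_simps)
        then show ?case by blast
      qed
    qed
    also have "\<dots> = integral\<^sup>L M (fbar f) - integral\<^sup>L M f + e"
      using f fi by (simp add: prob_space)
    finally show ?thesis by simp
  qed
  show ?thesis using field_le_epsilon[OF up] field_le_epsilon[OF lo] by simp
qed

end

context mps begin

lemma AE_inv_Sn:
  assumes "AE x in M. g (S x) = g x" shows "AE x in M. \<forall>k. g ((S ^^ k) x) = g x"
proof -
  have "AE x in M. \<forall>k. g (S ((S ^^ k) x)) = g ((S ^^ k) x)"
    unfolding AE_all_countable using AE_Sn[OF assms] by blast
  then show ?thesis
  proof eventually_elim
    case (elim x)
    show ?case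
    proof
      fix k show "g ((S ^^ k) x) = g x"
        by (induction k) (use elim in auto)
    qed
  qed
qed

lemma AE_ex: "AE x in M. P x \<Longrightarrow> \<exists>x. P x"
proof (rule ccontr)
  assume "AE x in M. P x" "\<not> (\<exists>x. P x)"
  then have "AE x in M. False" by simp
  then show False by (simp add: AE_False)
qed

lemma ergodic_const:
  fixes g :: "'a \<Rightarrow> real"
  assumes sp: "space M = UNIV"
    and erg: "\<forall>A\<in>sets M. S -` A = A \<longrightarrow> measure M A = 0 \<or> measure M A = 1"
    and g[measurable]: "g \<in> borel_measurable M" and inv: "AE x in M. g (S x) = g x"
  shows "\<exists>c. AE x in M. g x = c"
proof -
  define A where "A q = {y. \<forall>N0::nat. \<exists>n\<ge>N0. g ((S ^^ n) y) \<le> of_rat q}" for q :: rat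
  have Am[measurable]: "A q \<in> sets M" for q
  proof -
    have "{y \<in> space M. \<forall>N0::nat. \<exists>n\<ge>N0. g ((S ^^ n) y) \<le> of_rat q} \<in> sets M"
      by measurable
    then show ?thesis using sp unfolding A_def by simp
  qed
  have Ainv: "S -` A q = A q" for q
  proof (intro set_eqI iffI)
    fix y assume "y \<in> S -` A q"
    then have y: "\<forall>N0::nat. \<exists>n\<ge>N0. g ((S ^^ n) (S y)) \<le> of_rat q" by (simp add: A_def)
    show "y \<in> A q" unfolding A_def
    proof (intro CollectI allI)
      fix N0 :: nat
      from y obtain n where "n \<ge> N0" "g ((S ^^ n) (S y)) \<le> of_rat q" by blast
      then show "\<exists>n\<ge>N0. g ((S ^^ n) y) \<le> of_rat q"
        by (intro exI[of _ "Suc n"]) (simp add: funpow_swap1)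
    qed
  next
    fix y assume "y \<in> A q"
    then have y: "\<forall>N0::nat. \<exists>n\<ge>N0. g ((S ^^ n) y) \<le> of_rat q" by (simp add: A_def)
    show "y \<in> S -` A q" unfolding A_def
    proof (intro CollectI vimageI2 allI)
      fix N0 :: nat
      from y obtain n where n: "n \<ge> Suc N0" "g ((S ^^ n) y) \<le> of_rat q" by blast
      then obtain m where m: "n = Suc m" by (cases n) auto
      show "\<exists>n\<ge>N0. g ((S ^^ n) (S y)) \<le> of_rat q"
        using n m by (intro exI[of _ m]) (simp add: funpow_swap1)
    qed
  qed
  have AEA: "AE y in M. \<forall>q. y \<in> A q \<longleftrightarrow> g y \<le> of_rat q"
    using AE_inv_Sn[OF inv] by eventually_elim (auto simp: A_def)
  have AEP: "AE y in M. \<forall>q. g y \<le> of_rat q \<longleftrightarrow> measure M (A q) = 1"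
    unfolding AE_all_countable
  proof
    fix q
    have "measure M (A q) = 0 \<or> measure M (A q) = 1" using erg Am Ainv by blast
    then show "AE y in M. g y \<le> of_rat q \<longleftrightarrow> measure M (A q) = 1"
    proof
      assume m0: "measure M (A q) = 0"
      then have "A q \<in> null_sets M" using Am by (simp add: emeasure_eq_measure null_setsI)
      from AE_not_in[OF this] AEA show ?thesis
        by eventually_elim (use m0 in auto)
    next
      assume m1: "measure M (A q) = 1"
      have "AE y in M. y \<in> A q" using m1 Am by (intro AE_prob_1) auto
      with AEA show ?thesis
        by eventually_elim (use m1 in auto)
    qed
  qed
  obtain y0 where y0: "\<forall>q. g y0 \<le> of_rat q \<longleftrightarrow> measure M (A q) = 1"
    using AE_ex[OF AEP] by blast
  have "AE y in M. g y = g y0"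
    using AEP
  proof eventually_elim
    case (elim y)
    show ?case
    proof (rule ccontr)
      assume ne: "g y \<noteq> g y0"
      show False
      proof (cases "g y < g y0")
        case True
        obtain r where r: "r \<in> \<rat>" "g y < r" "r < g y0" using Rats_dense_in_real[OF True] by blast
        obtain q where "r = of_rat q" using r(1) Rats_cases by blast
        then show False using elim y0 r by (metis less_le_not_le order.strict_implies_order)
      next
        case False
        then have "g y0 < g y" using ne by linarith
        obtain r where r: "r \<in> \<rat>" "g y0 < r" "r < g y" using Rats_dense_in_real[OF \<open>g y0 < g y\<close>] by blast
        obtain q where "r = of_rat q" using r(1) Rats_cases by blast
        then show False using elim y0 r by (metis less_le_not_le order.strict_implies_order)
      qed
    qed
  qed
  then show ?thesis by blast
qed

end

lemma AE_distr_transfer: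
  assumes g: "g \<in> measurable M N" and ae: "AE y in distr M N g. P y"
  shows "AE x in M. P (g x)"
proof -
  from ae obtain A where A: "{x \<in> space (distr M N g). \<not> P x} \<subseteq> A" "emeasure (distr M N g) A = 0"
      "A \<in> sets (distr M N g)"
    by (rule AE_E)
  have As: "A \<in> sets N" using A(3) by simp
  have "emeasure M (g -` A \<inter> space M) = 0" using A(2) As g by (simp add: emeasure_distr)
  moreover have "g -` A \<inter> space M \<in> sets M" using measurable_sets[OF g As] .
  moreover have "{x \<in> space M. \<not> P (g x)} \<subseteq> g -` A \<inter> space M"
    using A(1) measurable_space[OF g] by auto
  ultimately show ?thesis by (intro AE_I) auto
qed

lemma bounded_integrable:
  fixes g :: "'a \<Rightarrow> real"
  assumes "prob_space M" "g \<in> borel_measurable M" "\<And>x. \<bar>g x\<bar> \<le> B"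
  shows "integrable M g"
proof -
  interpret prob_space M by fact
  show ?thesis using assms by (intro integrable_const_bound[where B=B]) auto
qed

lemma kernel_facts:
  assumes "K \<in> measurable borel (prob_algebra borel)"
  shows "prob_space (K y)" "sets (K y) = sets borel" "space (K y) = UNIV"
proof -
  have "K y \<in> space (prob_algebra borel)" using measurable_space[OF assms] by simp
  then show "prob_space (K y)" "sets (K y) = sets borel" by (auto simp: space_prob_algebra)
  then show "space (K y) = UNIV" using sets_eq_imp_space_eq by fastforce
qed

lemma kernel_integral_meas:
  fixes K :: "'y::topological_space \<Rightarrow> 'u::topological_space measure" and \<nu> :: "'y measure"
    and g :: "'u \<times> 'y \<Rightarrow> real"
  assumes sN: "sets \<nu> = sets borel" and K: "K \<in> measurable borel (prob_algebra borel)"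
    and g: "g \<in> borel_measurable (borel \<Otimes>\<^sub>M borel)"
  shows "(\<lambda>y. \<integral>u. g (u, y) \<partial>K y) \<in> borel_measurable \<nu>"
proof (rule integral_measurable_subprob_algebra2[where f="\<lambda>y u. g (u, y)" and N=borel])
  have "(\<lambda>(y, u). g (u, y)) \<in> borel_measurable (borel \<Otimes>\<^sub>M borel :: ('y \<times> 'u) measure)"
    using g by measurable
  then show "(\<lambda>(y, u). g (u, y)) \<in> borel_measurable (\<nu> \<Otimes>\<^sub>M borel)"
    by (subst measurable_cong_sets[OF sets_pair_measure_cong[OF sN refl] refl])
  show "K \<in> \<nu> \<rightarrow>\<^sub>M subprob_algebra borel"
    using measurable_prob_algebraD[OF K] by (subst measurable_cong_sets[OF sN refl])
qed

lemma disint_AE: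
  fixes Lam :: "('u::topological_space \<times> 'y::second_countable_topology) measure" and \<nu> :: "'y measure"
  assumes sL: "sets Lam = sets borel" and sN: "sets \<nu> = sets borel" and pN: "prob_space \<nu>"
    and D: "disintegration K \<nu> Lam" and ae: "AE x in Lam. P x"
  shows "AE y in \<nu>. AE u in K y. P (u, y)"
proof -
  from ae obtain N where N: "{x \<in> space Lam. \<not> P x} \<subseteq> N" "emeasure Lam N = 0" "N \<in> sets Lam"
    by (rule AE_E)
  have spL: "space Lam = UNIV" using sets_eq_imp_space_eq[OF sL] by simp
  have Nb: "N \<in> sets borel" using N(3) sL by simp
  have Nb2[measurable]: "N \<in> sets (borel \<Otimes>\<^sub>M borel)" using Nb sets_borel_prod_sc by blast
  have K: "K \<in> measurable borel (prob_algebra borel)" using D unfolding disintegration_def by blast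
  note Kf = kernel_facts[OF K]
  have gm: "indicator N \<in> borel_measurable (borel :: ('u \<times> 'y) measure)"
    using Nb by (rule borel_measurable_indicator)
  have DD: "\<forall>g \<in> borel_measurable borel. (\<exists>B::real. \<forall>x. \<bar>g x\<bar> \<le> B) \<longrightarrow>
        (\<integral>x. g x \<partial>Lam) = (\<integral>y. (\<integral>u. g (u, y) \<partial>K y) \<partial>\<nu>)"
    using D unfolding disintegration_def by blast
  have "\<exists>B::real. \<forall>x. \<bar>indicator N x\<bar> \<le> B" by (intro exI[of _ 1]) (simp add: indicator_def)
  then have "(\<integral>x. (indicator N x :: real) \<partial>Lam) = (\<integral>y. (\<integral>u. indicator N (u, y) \<partial>K y) \<partial>\<nu>)"
    using bspec[OF DD gm] by blast
  moreover have "(\<integral>x. indicator N x \<partial>Lam) = (0::real)"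
    using N(2,3) by (simp add: spL measure_def)
  ultimately have I0: "(\<integral>y. (\<integral>u. indicator N (u, y) \<partial>K y) \<partial>\<nu>) = (0::real)" by simp
  define h where "h y = (\<integral>u. indicator N (u, y) \<partial>K y :: real)" for y
  have hm: "h \<in> borel_measurable \<nu>" unfolding h_def
    by (rule kernel_integral_meas[OF sN K]) measurable
  have hnn: "0 \<le> h y" for y unfolding h_def by (auto intro!: integral_nonneg_AE)
  have hle: "h y \<le> 1" for y
  proof -
    interpret Ky: prob_space "K y" by (rule Kf(1))
    have eq: "(\<lambda>u. indicator N (u, y) :: real) = indicator {u. (u, y) \<in> N}"
      by (auto simp: indicator_def fun_eq_iff)
    have "h y = measure (K y) ({u. (u, y) \<in> N} \<inter> space (K y))"
      unfolding h_def eq by simp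
    then show ?thesis using Ky.prob_le_1 by simp
  qed
  have hi: "integrable \<nu> h"
    using hm hnn hle by (intro bounded_integrable[OF pN, where B=1]) auto
  have "AE y in \<nu>. h y = 0"
    using I0 hi hnn unfolding h_def[symmetric] by (subst integral_nonneg_eq_0_iff_AE[symmetric]) auto
  then show ?thesis
  proof eventually_elim
    case (elim y)
    interpret Ky: prob_space "K y" by (rule Kf(1))
    have im: "(\<lambda>u. indicator N (u, y) :: real) \<in> borel_measurable (K y)"
      by (subst measurable_cong_sets[OF Kf(2) refl]) measurable
    have ii: "integrable (K y) (\<lambda>u. indicator N (u, y) :: real)"
      by (rule bounded_integrable[OF Kf(1) im, where B=1]) (simp add: indicator_def)
    have "AE u in K y. (indicator N (u, y) :: real) = 0"
      using elim ii unfolding h_def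
      by (subst integral_nonneg_eq_0_iff_AE[symmetric]) auto
    then show ?case
      by eventually_elim (use N(1) spL in \<open>auto simp: indicator_def\<close>)
  qed
qed


lemma iter_pair: fixes R :: "'a \<Rightarrow> 'a" and T :: "'b \<Rightarrow> 'b"
  shows "((\<lambda>(u, y). (R u, T y)) ^^ k) (u, y) = ((R ^^ k) u, (T ^^ k) y)"
  by (induction k) auto

lemma bounded_integral_abs:
  fixes g :: "'a \<Rightarrow> real"
  assumes "prob_space M" "g \<in> borel_measurable M" "\<And>x. \<bar>g x\<bar> \<le> B"
  shows "\<bar>integral\<^sup>L M g\<bar> \<le> B"
proof -
  interpret prob_space M by fact
  have B0: "0 \<le> B" by (meson abs_ge_zero assms(3) order_trans)
  have "\<bar>integral\<^sup>L M g\<bar> \<le> (\<integral>x. \<bar>g x\<bar> \<partial>M)" using integral_abs_bound[of M g] by simp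
  also have "\<dots> \<le> (\<integral>x. B \<partial>M)"
    using assms B0 by (intro integral_mono bounded_integrable[where B=B]) auto
  also have "\<dots> = B" by (simp add: prob_space)
  finally show ?thesis .
qed

theorem lemma5p3:
  fixes T :: "'y::polish_space \<Rightarrow> 'y" and \<nu> :: "'y measure"
    and R :: "'u::complete_space \<Rightarrow> 'u"
    and f :: "'u \<times> 'y \<Rightarrow> real" and fstar :: "'y \<Rightarrow> real"
    and Lam :: "('u \<times> 'y) measure" and K :: "'y \<Rightarrow> 'u measure"
  assumes "invariant_ergodic T \<nu>"
    and "R \<in> borel_measurable borel"
    and "f \<in> borel_measurable borel"
    and "integrable \<nu> fstar"
    and "\<And>y u. \<bar>f (u, y)\<bar> \<le> fstar y"
    and "Lam \<in> joinings R T \<nu>"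
    and "disintegration K \<nu> Lam"
  shows "AE y in \<nu>. (\<lambda>n. (1 / real n) *
            (\<integral>u. (\<Sum>k<n. f ((R ^^ k) u, (T ^^ k) y)) \<partial>K y))
          \<longlonglongrightarrow> (\<integral>x. f x \<partial>Lam)"
proof -
  from assms(1) have pN: "prob_space \<nu>" and sN: "sets \<nu> = sets borel" and Tm: "T \<in> borel_measurable borel"
    and Tp: "distr \<nu> \<nu> T = \<nu>" and erg: "\<forall>A\<in>sets \<nu>. T -` A = A \<longrightarrow> measure \<nu> A = 0 \<or> measure \<nu> A = 1"
    unfolding invariant_ergodic_def by auto
  from assms(6) have pL: "prob_space Lam" and sL: "sets Lam = sets borel"
    and Lp: "distr Lam Lam (\<lambda>(u, y). (R u, T y)) = Lam" and marg: "distr Lam borel snd = \<nu>"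
    unfolding joinings_def by auto
  have K: "K \<in> measurable borel (prob_algebra borel)" using assms(7) unfolding disintegration_def by blast
  note Kf = kernel_facts[OF K]
  have DD0: "\<forall>g \<in> borel_measurable borel. (\<exists>B::real. \<forall>x. \<bar>g x\<bar> \<le> B) \<longrightarrow>
        (\<integral>x. g x \<partial>Lam) = (\<integral>y. (\<integral>u. g (u, y) \<partial>K y) \<partial>\<nu>)"
    using assms(7) unfolding disintegration_def by blast
  have DD: "(\<integral>x. g x \<partial>Lam) = (\<integral>y. (\<integral>u. g (u, y) \<partial>K y) \<partial>\<nu>)"
    if "g \<in> borel_measurable borel" "\<And>x. \<bar>g x\<bar> \<le> B" for g :: "'u \<times> 'y \<Rightarrow> real" and B
    using bspec[OF DD0 that(1)] that(2) by blast
  have sB2: "sets (borel :: ('u \<times> 'y) measure) = sets (borel \<Otimes>\<^sub>M borel)"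
    by (rule sets_borel_prod_sc)
  have sL2: "sets Lam = sets (borel \<Otimes>\<^sub>M borel)" using sL sB2 by simp
  note meqL = measurable_cong_sets[OF sL2 refl]
  note meqB = measurable_cong_sets[OF sB2 refl]
  note meqN = measurable_cong_sets[OF sN refl]
  note meqK = measurable_cong_sets[OF Kf(2) refl]
  have spN: "space \<nu> = UNIV" using sets_eq_imp_space_eq[OF sN] by simp
  define S' where "S' = (\<lambda>(u::'u, y::'y). (R u, T y))"
  have Rm[measurable]: "R \<in> borel \<rightarrow>\<^sub>M borel" using assms(2) .
  have Tm'[measurable]: "T \<in> borel \<rightarrow>\<^sub>M borel" using Tm .
  have fm2[measurable]: "f \<in> borel_measurable (borel \<Otimes>\<^sub>M borel)" using assms(3) by (simp add: meqB)
  have S'm2[measurable]: "S' \<in> (borel \<Otimes>\<^sub>M borel) \<rightarrow>\<^sub>M (borel \<Otimes>\<^sub>M borel)"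
    unfolding S'_def by measurable
  have S'mL: "S' \<in> Lam \<rightarrow>\<^sub>M Lam"
    using S'm2 by (simp add: measurable_cong_sets[OF sL2 sL2])
  interpret lam: mps Lam S'
    by (intro mps.intro mps_axioms.intro pL S'mL) (simp add: Lp S'_def)
  have TmN: "T \<in> \<nu> \<rightarrow>\<^sub>M \<nu>" using Tm by (simp add: measurable_cong_sets[OF sN sN])
  interpret nu: mps \<nu> T
    by (intro mps.intro mps_axioms.intro pN TmN Tp)
  have fsm[measurable]: "fstar \<in> borel_measurable borel" using assms(4) by (auto simp: meqN)
  have sndL: "snd \<in> Lam \<rightarrow>\<^sub>M borel" by (simp add: meqL)
  have fsLi: "integrable Lam (\<lambda>x. fstar (snd x))"
    using assms(4) marg integrable_distr_eq[OF sndL fsm] by simp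
  have fmL[measurable]: "f \<in> borel_measurable Lam" by (simp add: meqL)
  have fLi: "integrable Lam f"
  proof (rule Bochner_Integration.integrable_bound[OF fsLi fmL])
    show "AE x in Lam. norm (f x) \<le> norm (fstar (snd x))"
    proof (intro AE_I2)
      fix x :: "'u \<times> 'y"
      obtain u y where x: "x = (u, y)" by (cases x)
      show "norm (f x) \<le> norm (fstar (snd x))" using assms(5)[of u y] x by simp
    qed
  qed
  define fb where "fb = lam.fbar f"
  have B1: "AE x in Lam. (\<lambda>n. lam.birk f n x / real n) \<longlonglongrightarrow> fb x"
    unfolding fb_def by (rule lam.AE_lim[OF fLi])
  have B2: "AE x in Lam. fb (S' x) = fb x"
    unfolding fb_def by (rule lam.AE_fbar_S[OF fLi])
  have B3: "integral\<^sup>L Lam fb = integral\<^sup>L Lam f"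
    unfolding fb_def by (rule lam.integral_fbar[OF fLi])
  have fbmL: "fb \<in> borel_measurable Lam" unfolding fb_def by (rule lam.fbar_meas[OF fmL])
  have fbm2[measurable]: "fb \<in> borel_measurable (borel \<Otimes>\<^sub>M borel)" using fbmL by (simp add: meqL)
  have birkm2[measurable]: "lam.birk f n \<in> borel_measurable (borel \<Otimes>\<^sub>M borel)" for n
    using lam.birk_meas[OF fmL, of n] by (simp add: meqL)
  have birk_eq: "lam.birk f n (u, y) = (\<Sum>k<n. f ((R ^^ k) u, (T ^^ k) y))" for n u y
    unfolding lam.birk_def by (simp add: S'_def iter_pair)
  have birk_fs: "nu.birk fstar n y = (\<Sum>k<n. fstar ((T ^^ k) y))" for n y
    by (simp add: nu.birk_def)
  have birk_bnd: "\<bar>lam.birk f n (u, y) / real n\<bar> \<le> nu.birk fstar n y / real n" for n u y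
  proof -
    have "\<bar>lam.birk f n (u, y)\<bar> \<le> nu.birk fstar n y"
      unfolding birk_eq birk_fs
      by (rule order_trans[OF sum_abs]) (intro sum_mono assms(5))
    then show ?thesis by (simp add: abs_div_pos divide_right_mono)
  qed
  have fsbar_inv: "AE y in \<nu>. nu.fbar fstar (T y) = nu.fbar fstar y"
    by (rule nu.AE_fbar_S[OF assms(4)])
  obtain c0 where c0: "AE y in \<nu>. nu.fbar fstar y = c0"
    using nu.ergodic_const[OF spN erg nu.fbar_meas[OF borel_measurable_integrable[OF assms(4)]] fsbar_inv]
    by blast
  have E1: "AE y in \<nu>. (\<lambda>n. nu.birk fstar n y / real n) \<longlonglongrightarrow> c0"
    using nu.AE_lim[OF assms(4)] c0 by eventually_elim simp
  define C where "C = \<bar>c0\<bar>"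
  have C0: "0 \<le> C" unfolding C_def by simp
  have E1L: "AE x in Lam. (\<lambda>n. nu.birk fstar n (snd x) / real n) \<longlonglongrightarrow> c0"
    by (rule AE_distr_transfer[OF sndL]) (unfold marg, rule E1)
  have fbC: "AE x in Lam. \<bar>fb x\<bar> \<le> C"
    using B1 E1L
  proof eventually_elim
    case (elim x)
    obtain u y where x: "x = (u, y)" by (cases x)
    have "\<bar>fb x\<bar> \<le> c0"
      by (rule LIMSEQ_le[OF tendsto_rabs[OF elim(1)] elim(2)]) (use birk_bnd x in auto)
    then show ?case unfolding C_def by simp
  qed
  define fb' where "fb' x = max (- C) (min C (fb x))" for x
  have fb'm2[measurable]: "fb' \<in> borel_measurable (borel \<Otimes>\<^sub>M borel)"
    unfolding fb'_def[abs_def] by measurable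
  have fb'mB: "fb' \<in> borel_measurable borel" using fb'm2 by (simp add: meqB)
  have fb'mL: "fb' \<in> borel_measurable Lam" using fb'm2 by (simp add: meqL)
  have fb'C: "\<bar>fb' x\<bar> \<le> C" for x unfolding fb'_def using C0 by auto
  have AEfb: "AE x in Lam. fb' x = fb x"
    using fbC by eventually_elim (auto simp: fb'_def)
  have AEfb'S: "AE x in Lam. fb' (S' x) = fb' x"
    using AEfb lam.AE_S[OF AEfb] B2 by eventually_elim simp
  have G1: "AE y in \<nu>. AE u in K y. (\<lambda>n. lam.birk f n (u, y) / real n) \<longlonglongrightarrow> fb (u, y) \<and> fb' (u, y) = fb (u, y)"
    by (rule disint_AE[OF sL sN pN assms(7)]) (use B1 AEfb in \<open>eventually_elim, simp\<close>)
  define phi where "phi y = (\<integral>u. fb' (u, y) \<partial>K y)" for y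
  have phim: "phi \<in> borel_measurable \<nu>"
    unfolding phi_def by (rule kernel_integral_meas[OF sN K fb'm2])
  have phimB[measurable]: "phi \<in> borel_measurable borel" using phim by (simp add: meqN)
  have phiC: "\<bar>phi y\<bar> \<le> C" for y
    unfolding phi_def
    by (rule bounded_integral_abs[OF Kf(1)]) (use fb'C fb'm2 in \<open>auto simp: meqK\<close>)
  have phi_int: "integrable \<nu> (\<lambda>y. g y)" if "g \<in> borel_measurable borel" "\<And>y. \<bar>g y\<bar> \<le> B" for g :: "'y \<Rightarrow> real" and B
    using that by (intro bounded_integrable[OF pN, where B=B]) (auto simp: meqN)
  have sndB[measurable]: "snd \<in> (borel \<Otimes>\<^sub>M borel :: ('u \<times> 'y) measure) \<rightarrow>\<^sub>M borel" by simp
  have I1: "(\<integral>y. phi y * phi (T y) \<partial>\<nu>) = (\<integral>x. fb' x * phi (T (snd x)) \<partial>Lam)"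
  proof -
    have gm: "(\<lambda>x. fb' x * phi (T (snd x))) \<in> borel_measurable (borel \<Otimes>\<^sub>M borel)" by measurable
    have "(\<integral>x. fb' x * phi (T (snd x)) \<partial>Lam) = (\<integral>y. (\<integral>u. fb' (u, y) * phi (T (snd (u, y))) \<partial>K y) \<partial>\<nu>)"
    proof (rule DD[of "\<lambda>x. fb' x * phi (T (snd x))" "C * C"])
      show "(\<lambda>x. fb' x * phi (T (snd x))) \<in> borel_measurable borel" using gm by (simp add: meqB)
      show "\<bar>fb' x * phi (T (snd x))\<bar> \<le> C * C" for x
        unfolding abs_mult using fb'C phiC C0 by (intro mult_mono) auto
    qed
    also have "\<dots> = (\<integral>y. phi y * phi (T y) \<partial>\<nu>)"
      unfolding phi_def by simp
    finally show ?thesis by simp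
  qed
  have I2: "(\<integral>x. fb' x * phi (T (snd x)) \<partial>Lam) = (\<integral>x. fb' (S' x) * phi (T (snd x)) \<partial>Lam)"
  proof (rule integral_cong_AE)
    show "(\<lambda>x. fb' x * phi (T (snd x))) \<in> borel_measurable Lam" by (simp add: meqL)
    show "(\<lambda>x. fb' (S' x) * phi (T (snd x))) \<in> borel_measurable Lam" by (simp add: meqL)
    show "AE x in Lam. fb' x * phi (T (snd x)) = fb' (S' x) * phi (T (snd x))"
      using AEfb'S by eventually_elim simp
  qed
  have I3: "(\<integral>x. fb' (S' x) * phi (T (snd x)) \<partial>Lam) = (\<integral>x. fb' x * phi (snd x) \<partial>Lam)"
  proof -
    have hm: "(\<lambda>x. fb' x * phi (snd x)) \<in> borel_measurable Lam" by (simp add: meqL)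
    have "(\<integral>x. fb' (S' x) * phi (T (snd x)) \<partial>Lam) = (\<integral>x. fb' (S' x) * phi (snd (S' x)) \<partial>Lam)"
      by (intro Bochner_Integration.integral_cong refl) (auto simp: S'_def split: prod.splits)
    also have "\<dots> = (\<integral>x. fb' x * phi (snd x) \<partial>Lam)"
      using lam.integral_S[OF hm] by simp
    finally show ?thesis .
  qed
  have I4: "(\<integral>x. fb' x * phi (snd x) \<partial>Lam) = (\<integral>y. phi y * phi y \<partial>\<nu>)"
  proof -
    have gm: "(\<lambda>x. fb' x * phi (snd x)) \<in> borel_measurable (borel \<Otimes>\<^sub>M borel)" by measurable
    have "(\<integral>x. fb' x * phi (snd x) \<partial>Lam) = (\<integral>y. (\<integral>u. fb' (u, y) * phi (snd (u, y)) \<partial>K y) \<partial>\<nu>)"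
    proof (rule DD[of "\<lambda>x. fb' x * phi (snd x)" "C * C"])
      show "(\<lambda>x. fb' x * phi (snd x)) \<in> borel_measurable borel" using gm by (simp add: meqB)
      show "\<bar>fb' x * phi (snd x)\<bar> \<le> C * C" for x
        unfolding abs_mult using fb'C phiC C0 by (intro mult_mono) auto
    qed
    also have "\<dots> = (\<integral>y. phi y * phi y \<partial>\<nu>)"
      unfolding phi_def by simp
    finally show ?thesis .
  qed
  have I5: "(\<integral>y. phi (T y) * phi (T y) \<partial>\<nu>) = (\<integral>y. phi y * phi y \<partial>\<nu>)"
    using nu.integral_S[of "\<lambda>y. phi y * phi y"] phim by simp
  have pp: "\<bar>phi a * phi b\<bar> \<le> C * C" for a b
    unfolding abs_mult by (intro mult_mono phiC) (auto simp: C0)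
  have pp2: "\<bar>(phi a - phi b)\<^sup>2\<bar> \<le> (2 * C)\<^sup>2" for a b
  proof -
    have "\<bar>phi a - phi b\<bar> \<le> 2 * C" using phiC[of a] phiC[of b] by linarith
    then have "\<bar>phi a - phi b\<bar>\<^sup>2 \<le> (2 * C)\<^sup>2" by (intro power_mono) auto
    then show ?thesis by simp
  qed
  have ia: "integrable \<nu> (\<lambda>y. phi (T y) * phi (T y))"
    by (rule phi_int[of _ "C * C"]) (measurable, rule pp)
  have ib: "integrable \<nu> (\<lambda>y. phi y * phi (T y))"
    by (rule phi_int[of _ "C * C"]) (measurable, rule pp)
  have ic: "integrable \<nu> (\<lambda>y. phi y * phi y)"
    by (rule phi_int[of _ "C * C"]) (measurable, rule pp)
  have sq: "(\<integral>y. (phi (T y) - phi y)\<^sup>2 \<partial>\<nu>) = 0"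
  proof -
    have "(\<integral>y. (phi (T y) - phi y)\<^sup>2 \<partial>\<nu>)
        = (\<integral>y. phi (T y) * phi (T y) - 2 * (phi y * phi (T y)) + phi y * phi y \<partial>\<nu>)"
      by (intro Bochner_Integration.integral_cong refl) (simp add: power2_eq_square algebra_simps)
    also have "\<dots> = (\<integral>y. phi (T y) * phi (T y) \<partial>\<nu>) - 2 * (\<integral>y. phi y * phi (T y) \<partial>\<nu>)
        + (\<integral>y. phi y * phi y \<partial>\<nu>)"
      using ia ib ic by simp
    also have "\<dots> = 0" using I1 I2 I3 I4 I5 by simp
    finally show ?thesis .
  qed
  have "AE y in \<nu>. (phi (T y) - phi y)\<^sup>2 = 0"
  proof (subst integral_nonneg_eq_0_iff_AE[symmetric])
    show "integrable \<nu> (\<lambda>y. (phi (T y) - phi y)\<^sup>2)"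
      by (rule phi_int[of _ "(2 * C)\<^sup>2"])
(measurable, rule pp2)
  qed (use sq in auto)
  then have phi_inv: "AE y in \<nu>. phi (T y) = phi y" by eventually_elim simp
  obtain c where c: "AE y in \<nu>. phi y = c"
    using nu.ergodic_const[OF spN erg phim phi_inv] by blast
  have c_eq: "c = (\<integral>x. f x \<partial>Lam)"
  proof -
    have "c = (\<integral>y. phi y \<partial>\<nu>)"
      using c phim by (subst integral_cong_AE[where g="\<lambda>_. c"]) (auto simp: prob_space.prob_space[OF pN])
    also have "\<dots> = (\<integral>x. fb' x \<partial>Lam)"
      unfolding phi_def by (rule DD[of fb' C, symmetric]) (use fb'mB fb'C in auto)
    also have "\<dots> = (\<integral>x. fb x \<partial>Lam)"
      using AEfb fb'mL fbmL by (intro integral_cong_AE) auto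
    also have "\<dots> = (\<integral>x. f x \<partial>Lam)" using B3 by simp
    finally show ?thesis .
  qed
  show ?thesis
    using G1 E1 c
  proof eventually_elim
    case (elim y)
    interpret Ky: prob_space "K y" by (rule Kf(1))
    obtain Bd where Bd: "\<And>n. norm (nu.birk fstar n y / real n) \<le> Bd"
      using convergent_imp_Bseq[OF convergentI[OF elim(2)]] unfolding Bseq_def by blast
    have pm: "(\<lambda>u. (u, y)) \<in> borel \<rightarrow>\<^sub>M (borel \<Otimes>\<^sub>M borel :: ('u \<times> 'y) measure)" by simp
    have lim: "(\<lambda>n. \<integral>u. lam.birk f n (u, y) / real n \<partial>K y) \<longlonglongrightarrow> (\<integral>u. fb (u, y) \<partial>K y)"
    proof (rule integral_dominated_convergence[where w="\<lambda>_. Bd"])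
      show "(\<lambda>u. fb (u, y)) \<in> borel_measurable (K y)"
        unfolding meqK using measurable_compose[OF pm fbm2] by simp
      show "(\<lambda>u. lam.birk f n (u, y) / real n) \<in> borel_measurable (K y)" for n
        unfolding meqK using measurable_compose[OF pm birkm2[of n]] by simp
      show "AE u in K y. (\<lambda>n. lam.birk f n (u, y) / real n) \<longlonglongrightarrow> fb (u, y)"
        using elim(1) by eventually_elim simp
      show "AE u in K y. norm (lam.birk f n (u, y) / real n) \<le> Bd" for n
      proof (intro AE_I2)
        fix u
        have "\<bar>lam.birk f n (u, y) / real n\<bar> \<le> nu.birk fstar n y / real n" by (rule birk_bnd)
        also have "\<dots> \<le> Bd" using Bd[of n] by (metis abs_ge_self order_trans real_norm_def)
        finally show "norm (lam.birk f n (u, y) / real n) \<le> Bd" by simp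
      qed
    qed simp
    have "(\<integral>u. fb (u, y) \<partial>K y) = phi y"
      unfolding phi_def
    proof (rule integral_cong_AE)
      show "(\<lambda>u. fb (u, y)) \<in> borel_measurable (K y)"
        unfolding meqK using measurable_compose[OF pm fbm2] by simp
      show "(\<lambda>u. fb' (u, y)) \<in> borel_measurable (K y)"
        unfolding meqK using measurable_compose[OF pm fb'm2] by simp
      show "AE u in K y. fb (u, y) = fb' (u, y)"
        using elim(1) by eventually_elim simp
    qed
    then have lim2: "(\<lambda>n. \<integral>u. lam.birk f n (u, y) / real n \<partial>K y) \<longlonglongrightarrow> (\<integral>x. f x \<partial>Lam)"
      using lim elim(3) c_eq by simp
    have "(\<integral>u. lam.birk f n (u, y) / real n \<partial>K y) =
        (1 / real n) * (\<integral>u. (\<Sum>k<n. f ((R ^^ k) u, (T ^^ k) y)) \<partial>K y)" for n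
      unfolding birk_eq by simp
    then have eqf: "(\<lambda>n. \<integral>u. lam.birk f n (u, y) / real n \<partial>K y) =
        (\<lambda>n. (1 / real n) * (\<integral>u. (\<Sum>k<n. f ((R ^^ k) u, (T ^^ k) y)) \<partial>K y))"
      by (rule ext)
    show ?case using lim2 unfolding eqf .
  qed
qed

end
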